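(* Let $p$ be an odd prime and let $X$ be a finite family of $4p-3$ lattice points in $\mathbb{Z}^2$ (repetitions allowed). If $(p,X)=0$, then $(p-1,X)\equiv(3p-1,X) \pmod p$.
   Context: For a finite family $X$ of lattice points in $\mathbb{Z}^2$ (points may repeat; subsets are subfamilies, i.e. subsets of the index set) and an integer $n\ge 0$, $(n,X)$ denotes the number of $n$-element subfamilies of $X$ whose coordinatewise sum is congruent to $(0,0)$ modulo $p$. *)

theory Defs
  imports "HOL-Number_Theory.Cong" "HOL-Computational_Algebra.Primes"
begin

text \<open>A finite family of lattice points is given by an index set I and a map
  X from indices to points in Z^2. (n, X) counts the n-element subsets of the
  index set whose coordinatewise sum is congruent to (0,0) modulo p.\<close>

definition zero_sum_count :: "nat \<Rightarrow> nat \<Rightarrow> 'i set \<Rightarrow> ('i \<Rightarrow> int \<times> int) \<Rightarrow> nat" where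
  "zero_sum_count p n I X =
     card {S. S \<subseteq> I \<and> card S = n \<and>
              (\<Sum>i\<in>S. fst (X i)) mod int p = 0 \<and>
              (\<Sum>i\<in>S. snd (X i)) mod int p = 0}"

end

theory Submission imports Defs "HOL-Library.FuncSet" "HOL-Number_Theory.Number_Theory" begin

lemma alt_zero:
  fixes K U :: "'i set"
  assumes "finite K" "U \<subseteq> K" "U \<noteq> K"
  shows "(\<Sum>S\<in>Pow K. if U \<subseteq> S then (-1::int)^card S else 0) = 0"
proof -
  obtain x where x: "x \<in> K" "x \<notin> U" using assms by blast
  define K' where "K' = K - {x}"
  have K: "K = insert x K'" "x \<notin> K'" "finite K'" using x assms by (auto simp: K'_def)
  have disj: "Pow K' \<inter> insert x ` Pow K' = {}" using K by auto
  have inj: "inj_on (insert x) (Pow K')"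
  proof (rule inj_onI)
    fix A B assume "A \<in> Pow K'" "B \<in> Pow K'" "insert x A = insert x B"
    then show "A = B" using K(2) by (metis PowD insert_ident subsetD)
  qed
  have "(\<Sum>S\<in>insert x ` Pow K'. if U \<subseteq> S then (-1::int)^card S else 0)
      = (\<Sum>S\<in>Pow K'. if U \<subseteq> insert x S then (-1::int)^card (insert x S) else 0)"
    by (subst sum.reindex[OF inj]) simp
  also have "\<dots> = (\<Sum>S\<in>Pow K'. - (if U \<subseteq> S then (-1::int)^card S else 0))"
  proof (rule sum.cong)
    fix S assume "S \<in> Pow K'"
    then have "x \<notin> S" "finite S" using K finite_subset by auto
    moreover have "U \<subseteq> insert x S \<longleftrightarrow> U \<subseteq> S" using x by blast
    ultimately show "(if U \<subseteq> insert x S then (-1::int)^card (insert x S) else 0) = - (if U \<subseteq> S then (-1::int)^card S else 0)"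
      by simp
  qed simp
  finally have e: "(\<Sum>S\<in>insert x ` Pow K'. if U \<subseteq> S then (-1::int)^card S else 0) = - (\<Sum>S\<in>Pow K'. if U \<subseteq> S then (-1::int)^card S else 0)"
    by (simp add: sum_negf)
  show ?thesis
    unfolding K(1) Pow_insert
    by (subst sum.union_disjoint) (use K disj e in auto)
qed

lemma L0:
  fixes K :: "'i set" and c :: "nat \<Rightarrow> 'i \<Rightarrow> int"
  assumes "finite K" "d < card K"
  shows "(\<Sum>S\<in>Pow K. (-1)^card S * (\<Prod>j<d. \<Sum>i\<in>S. c j i)) = 0"
proof -
  have "(\<Sum>S\<in>Pow K. (-1)^card S * (\<Prod>j<d. \<Sum>i\<in>S. c j i))
     = (\<Sum>S\<in>Pow K. \<Sum>f\<in>PiE {..<d} (\<lambda>_. K). if f ` {..<d} \<subseteq> S then (-1)^card S * (\<Prod>j<d. c j (f j)) else 0)"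
  proof (rule sum.cong)
    fix S assume S: "S \<in> Pow K"
    then have fS: "finite S" using assms finite_subset by auto
    have "(\<Prod>j<d. \<Sum>i\<in>S. c j i) = (\<Sum>f\<in>PiE {..<d} (\<lambda>_. S). \<Prod>j<d. c j (f j))"
      by (rule prod_sum_PiE) (use fS in auto)
    also have "\<dots> = (\<Sum>f\<in>PiE {..<d} (\<lambda>_. K). if f ` {..<d} \<subseteq> S then (\<Prod>j<d. c j (f j)) else 0)"
    proof -
      have "PiE {..<d} (\<lambda>_. S) = {f\<in>PiE {..<d} (\<lambda>_. K). f ` {..<d} \<subseteq> S}"
        using S by (auto simp: PiE_def Pi_def)
      then show ?thesis
        by (simp add: sum.If_cases finite_PiE assms Int_def)
    qed
    finally show "(-1)^card S * (\<Prod>j<d. \<Sum>i\<in>S. c j i) = (\<Sum>f\<in>PiE {..<d} (\<lambda>_. K). if f ` {..<d} \<subseteq> S then (-1)^card S * (\<Prod>j<d. c j (f j)) else 0)"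
      by (simp add: sum_distrib_left if_distrib cong: if_cong)
  qed simp
  also have "\<dots> = (\<Sum>f\<in>PiE {..<d} (\<lambda>_. K). \<Sum>S\<in>Pow K. if f ` {..<d} \<subseteq> S then (-1)^card S * (\<Prod>j<d. c j (f j)) else 0)"
    by (rule sum.swap)
  also have "\<dots> = (\<Sum>f\<in>PiE {..<d} (\<lambda>_. K). (\<Prod>j<d. c j (f j)) * (\<Sum>S\<in>Pow K. if f ` {..<d} \<subseteq> S then (-1::int)^card S else 0))"
    by (simp add: sum_distrib_left if_distrib mult.commute cong: if_cong)
  also have "\<dots> = 0"
  proof (rule sum.neutral, rule ballI)
    fix f assume f: "f \<in> PiE {..<d} (\<lambda>_. K)"
    have sub: "f ` {..<d} \<subseteq> K" using f by auto
    have "card (f ` {..<d}) \<le> d" using card_image_le[of "{..<d}" f] by simp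
    then have "f ` {..<d} \<noteq> K" using assms by auto
    then show "(\<Prod>j<d. c j (f j)) * (\<Sum>S\<in>Pow K. if f ` {..<d} \<subseteq> S then (-1::int)^card S else 0) = 0"
      using alt_zero[OF assms(1) sub] by simp
  qed
  finally show ?thesis .
qed

lemma prod_split_add: "(\<Prod>j<n+m. f j) = (\<Prod>j<n. f j) * (\<Prod>j<m. f (n+j)) " for f :: "nat \<Rightarrow> 'a::comm_monoid_mult"
  by (induction m) (simp_all add: mult.assoc)

lemma L1:
  fixes K :: "'i set" and a b e :: "'i \<Rightarrow> int"
  assumes "finite K" "\<alpha> + \<beta> + \<gamma> < card K"
  shows "(\<Sum>S\<in>Pow K. (-1)^card S * ((\<Sum>i\<in>S. a i)^\<alpha> * (\<Sum>i\<in>S. b i)^\<beta> * (\<Sum>i\<in>S. e i)^\<gamma>)) = 0"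
proof -
  define c where "c = (\<lambda>j. if j < \<alpha> then a else if j < \<alpha>+\<beta> then b else e)"
  have "(\<Sum>i\<in>S. a i)^\<alpha> * (\<Sum>i\<in>S. b i)^\<beta> * (\<Sum>i\<in>S. e i)^\<gamma> = (\<Prod>j<\<alpha>+\<beta>+\<gamma>. \<Sum>i\<in>S. c j i)" for S
    unfolding prod_split_add by (simp add: c_def)
  then show ?thesis using L0[OF assms(1), of "\<alpha>+\<beta>+\<gamma>" c] assms(2) by simp
qed

lemma fermat_int:
  fixes a :: int
  assumes "prime p" "\<not> int p dvd a"
  shows "[a^(p-1) = 1] (mod int p)"
proof -
  define b where "b = nat (a mod int p)"
  have p0: "p > 0" using assms prime_gt_0_nat by blast
  have bi: "int b = a mod int p" using p0 by (simp add: b_def)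
  have "\<not> p dvd b"
  proof
    assume "p dvd b" then have "int p dvd int b" by simp
    then have "int p dvd a" using bi by (simp add: dvd_mod_iff)
    then show False using assms by simp
  qed
  then have "[b^(p-1) = 1] (mod p)" using fermat_theorem assms(1) by blast
  then have "[int b^(p-1) = 1] (mod int p)" by (metis cong_int_iff of_nat_1 of_nat_power)
  moreover have "[int b^(p-1) = a^(p-1)] (mod int p)" unfolding bi by (intro cong_pow) (simp add: cong_def)
  ultimately show ?thesis using cong_sym cong_trans by blast
qed

lemma ind_cong:
  fixes a :: int
  assumes "prime p"
  shows "[1 - a^(p-1) = (if a mod int p = 0 then 1 else 0)] (mod int p)"
proof (cases "int p dvd a")
  case True
  have p1: "p - 1 > 0" using assms prime_gt_1_nat by fastforce
  have "int p dvd a^(p-1)" using True p1 by (meson dvd_power dvd_trans)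
  then have "[a^(p-1) = 0] (mod int p)" by (simp add: cong_0_iff)
  then have "[1 - a^(p-1) = 1 - 0] (mod int p)" by (intro cong_diff) auto
  then show ?thesis using True by simp
next
  case False
  then have "[1 - a^(p-1) = 1 - 1] (mod int p)" using fermat_int[OF assms False] by (intro cong_diff) auto
  then show ?thesis using False by (simp add: dvd_eq_mod_eq_0)
qed

definition zs :: "nat \<Rightarrow> ('i \<Rightarrow> int \<times> int) \<Rightarrow> 'i set \<Rightarrow> bool" where
  "zs p X S \<longleftrightarrow> (\<Sum>i\<in>S. fst (X i)) mod int p = 0 \<and> (\<Sum>i\<in>S. snd (X i)) mod int p = 0"

lemma zsc_def2: "zero_sum_count p n I X = card {S. S \<subseteq> I \<and> card S = n \<and> zs p X S}"
  unfolding zero_sum_count_def zs_def by (simp add: conj_assoc)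

lemma CW:
  fixes K :: "'i set" and X :: "'i \<Rightarrow> int \<times> int"
  assumes "prime p" "odd p" "finite K" "3*(p-1) < card K" "card K < 3*p"
  shows "[1 - int (zero_sum_count p p K X) + int (zero_sum_count p (2*p) K X) = 0] (mod int p)"
proof -
  define q where "q = p - 1"
  define A where "A (S::'i set) = (\<Sum>i\<in>S. fst (X i))" for S
  define B where "B (S::'i set) = (\<Sum>i\<in>S. snd (X i))" for S
  define C where "C (S::'i set) = (\<Sum>i\<in>S. (1::int))" for S
  have z: "(\<Sum>S\<in>Pow K. (-1)^card S * (A S^\<alpha> * B S^\<beta> * C S^\<gamma>)) = 0" if "\<alpha> + \<beta> + \<gamma> < card K" for \<alpha> \<beta> \<gamma>
    unfolding A_def B_def C_def by (rule L1[OF assms(3) that])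
  have q3: "q+q+q < card K" "q+q+0 < card K" "q+0+q < card K" "0+q+q < card K"
     "q+0+0 < card K" "0+q+0 < card K" "0+0+q < card K" "0+0+0 < card K"
    using assms(4) by (auto simp: q_def)
  have expand: "(-1)^card S * ((1 - A S^q) * (1 - B S^q) * (1 - C S^q)) =
     (-1)^card S * (A S^0 * B S^0 * C S^0) - (-1)^card S * (A S^q * B S^0 * C S^0)
     - (-1)^card S * (A S^0 * B S^q * C S^0) - (-1)^card S * (A S^0 * B S^0 * C S^q)
     + (-1)^card S * (A S^q * B S^q * C S^0) + (-1)^card S * (A S^q * B S^0 * C S^q)
     + (-1)^card S * (A S^0 * B S^q * C S^q) - (-1)^card S * (A S^q * B S^q * C S^q)" for S :: "'i set"
    by (simp add: algebra_simps)
  have zero: "(\<Sum>S\<in>Pow K. (-1)^card S * ((1 - A S^q) * (1 - B S^q) * (1 - C S^q))) = (0::int)"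
    unfolding expand sum.distrib sum_subtractf using z[OF q3(1)] z[OF q3(2)] z[OF q3(3)] z[OF q3(4)]
      z[OF q3(5)] z[OF q3(6)] z[OF q3(7)] z[OF q3(8)] by simp
  define ind where "ind a = (if a mod int p = 0 then 1 else (0::int))" for a
  have "[(\<Sum>S\<in>Pow K. (-1)^card S * ((1 - A S^q) * (1 - B S^q) * (1 - C S^q)))
       = (\<Sum>S\<in>Pow K. (-1)^card S * (ind (A S) * ind (B S) * ind (C S)))] (mod int p)"
    unfolding q_def ind_def
    by (intro cong_sum cong_mult cong_refl ind_cong[OF assms(1)])
  then have c1: "[(\<Sum>S\<in>Pow K. (-1)^card S * (ind (A S) * ind (B S) * ind (C S))) = 0] (mod int p)"
    using zero by (simp add: cong_sym)
  define Z where "Z k = {S. S \<subseteq> K \<and> card S = k \<and> zs p X S}" for k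
  have CS: "C S = int (card S)" for S by (simp add: C_def)
  have "(\<Sum>S\<in>Pow K. (-1)^card S * (ind (A S) * ind (B S) * ind (C S)))
      = (\<Sum>S\<in>{S\<in>Pow K. zs p X S \<and> p dvd card S}. (-1)^card S)"
  proof -
    have md: "int (card S) mod int p = 0 \<longleftrightarrow> p dvd card S" for S :: "'i set"
      by (metis dvd_eq_mod_eq_0 int_dvd_int_iff)
    have "(\<Sum>S\<in>Pow K. (-1)^card S * (ind (A S) * ind (B S) * ind (C S)))
        = (\<Sum>S\<in>Pow K. if zs p X S \<and> p dvd card S then (-1)^card S else 0)"
      by (rule sum.cong) (auto simp: ind_def CS zs_def A_def B_def md)
    also have "\<dots> = (\<Sum>S\<in>{S\<in>Pow K. zs p X S \<and> p dvd card S}. (-1)^card S)"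
      by (rule sum.inter_filter[symmetric]) (simp add: assms(3))
    finally show ?thesis .
  qed
  also have "{S\<in>Pow K. zs p X S \<and> p dvd card S} = Z 0 \<union> Z p \<union> Z (2*p)"
  proof -
    have "card S \<in> {0, p, 2*p}" if SK: "S \<subseteq> K" "p dvd card S" for S
    proof -
      obtain k where k: "card S = p * k" using SK(2) by blast
      have "card S \<le> card K" using SK(1) assms(3) card_mono by blast
      then have "p * k < p * 3" using k assms(5) by linarith
      then have "k < 3" by simp
      then have "k = 0 \<or> k = 1 \<or> k = 2" by auto
      then show ?thesis using k by auto
    qed
    then show ?thesis unfolding Z_def by auto
  qed
  also have "(\<Sum>S\<in>Z 0 \<union> Z p \<union> Z (2*p). (-1::int)^card S)
     = (\<Sum>S\<in>Z 0. (-1)^card S) + (\<Sum>S\<in>Z p. (-1)^card S) + (\<Sum>S\<in>Z (2*p). (-1)^card S)"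
  proof -
    have fin: "finite (Z k)" for k
      by (rule finite_subset[of _ "Pow K"]) (auto simp: Z_def assms(3))
    have p0: "p > 0" using assms(1) prime_gt_0_nat by blast
    have d1: "(Z 0 \<union> Z p) \<inter> Z (2*p) = {}" using p0 by (auto simp: Z_def)
    have d2: "Z 0 \<inter> Z p = {}" using p0 by (auto simp: Z_def)
    show ?thesis
      by (simp add: sum.union_disjoint fin d1 d2)
  qed
  also have zk: "(\<Sum>S\<in>Z k. (-1::int)^card S) = (-1)^k * int (zero_sum_count p k K X)" for k
    unfolding zsc_def2 Z_def by simp
  also note zk also note zk
  finally have c2: "[(-1)^0 * int (zero_sum_count p 0 K X) + (-1)^p * int (zero_sum_count p p K X)
     + (-1)^(2*p) * int (zero_sum_count p (2*p) K X) = 0] (mod int p)"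
    using c1 by simp
  have "Z 0 = {{}}" using assms(3) by (auto simp: Z_def zs_def card_eq_0_iff dest: finite_subset)
  then have "zero_sum_count p 0 K X = 1" unfolding zsc_def2 Z_def[symmetric] by simp
  then show ?thesis using c2 assms(2) by simp
qed

lemma zs_diff:
  assumes "finite T" "A \<subseteq> T" "zs p X T" "zs p X A"
  shows "zs p X (T - A)"
proof -
  have "finite A" using assms finite_subset by blast
  then show ?thesis using assms unfolding zs_def
    by (simp add: sum_diff mod_eq_0_iff_dvd dvd_diff del: dvd_imp_mod_0)
qed

lemma zs_union:
  assumes "finite A" "finite B" "A \<inter> B = {}" "zs p X A" "zs p X B"
  shows "zs p X (A \<union> B)"
  using assms unfolding zs_def
  by (simp add: sum.union_disjoint mod_eq_0_iff_dvd del: dvd_imp_mod_0)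

definition Zn where "Zn p X n T = {S. S \<subseteq> T \<and> card S = n \<and> zs p X S}"

lemma zsc_Zn: "zero_sum_count p n T X = card (Zn p X n T)"
  unfolding zsc_def2 Zn_def ..

lemma fin_Zn: "finite T \<Longrightarrow> finite (Zn p X n T)"
  by (rule finite_subset[of _ "Pow T"]) (auto simp: Zn_def)

theorem mainTheorem6:
  fixes p :: nat and I :: "'i set" and X :: "'i \<Rightarrow> int \<times> int"
  assumes "prime p" and "odd p"
    and "finite I" and "card I = 4 * p - 3"
    and "zero_sum_count p p I X = 0"
  shows "[zero_sum_count p (p - 1) I X = zero_sum_count p (3 * p - 1) I X] (mod p)"
proof -
  have p2: "p \<ge> 2" using assms(1) prime_ge_2_nat by blast
  have p3: "p \<ge> 3" using p2 assms(2) by (metis dvd_refl le_antisym not_less_eq_eq numeral_2_eq_2 numeral_3_eq_3)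
  have emp: "Zn p X p I = {}" using assms(5) fin_Zn[OF assms(3)] by (simp add: zsc_Zn)
  have noP: "zero_sum_count p p T X = 0" if "T \<subseteq> I" for T
  proof -
    have "Zn p X p T = {}" using emp that by (auto simp: Zn_def)
    then show ?thesis by (simp add: zsc_Zn)
  qed
  have cw: "[int (card (Zn p X (2*p) T)) = -1] (mod int p)" if "T \<subseteq> I" "card T = 3*p-2 \<or> card T = 3*p-1" for T
  proof -
    have "finite T" using that assms(3) finite_subset by blast
    moreover have "3*(p-1) < card T" "card T < 3*p" using that p3 by auto
    ultimately have "[1 - int (zero_sum_count p p T X) + int (zero_sum_count p (2*p) T X) = 0] (mod int p)"
      using CW[OF assms(1,2)] by blast
    then have "[1 + int (card (Zn p X (2*p) T)) = 0] (mod int p)" using noP[OF that(1)] by (simp add: zsc_Zn)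
    then have "[1 + int (card (Zn p X (2*p) T)) - 1 = 0 - 1] (mod int p)" by (intro cong_diff) auto
    then show ?thesis by simp
  qed
  define ZT where "ZT = Zn p X (3*p-1) I"
  define ZA where "ZA = Zn p X (p-1) I"
  have finT: "finite ZT" "finite ZA" unfolding ZT_def ZA_def using fin_Zn[OF assms(3)] by auto
  have k1: "card (Zn p X (p-1) T) = card (Zn p X (2*p) T)" if "T \<in> ZT" for T
  proof -
    have T: "T \<subseteq> I" "card T = 3*p-1" "zs p X T" using that by (auto simp: ZT_def Zn_def)
    have fT: "finite T" using T assms(3) finite_subset by blast
    have "bij_betw (\<lambda>A. T - A) (Zn p X (p-1) T) (Zn p X (2*p) T)"
    proof (rule bij_betw_byWitness[where f' = "\<lambda>A. T - A"])
      show "\<forall>a\<in>Zn p X (p - 1) T. T - (T - a) = a" by (auto simp: Zn_def)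
      show "\<forall>a\<in>Zn p X (2*p) T. T - (T - a) = a" by (auto simp: Zn_def)
      show "(-) T ` Zn p X (p - 1) T \<subseteq> Zn p X (2 * p) T"
      proof
        fix B assume "B \<in> (-) T ` Zn p X (p - 1) T"
        then obtain A where A: "A \<subseteq> T" "card A = p-1" "zs p X A" "B = T - A" by (auto simp: Zn_def)
        have "card B = 2*p" using A T fT p3 by (simp add: card_Diff_subset finite_subset)
        then show "B \<in> Zn p X (2 * p) T" using A zs_diff[OF fT A(1) T(3) A(3)] by (auto simp: Zn_def)
      qed
      show "(-) T ` Zn p X (2*p) T \<subseteq> Zn p X (p - 1) T"
      proof
        fix B assume "B \<in> (-) T ` Zn p X (2*p) T"
        then obtain A where A: "A \<subseteq> T" "card A = 2*p" "zs p X A" "B = T - A" by (auto simp: Zn_def)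
        have "card B = p-1" using A T fT p3 by (simp add: card_Diff_subset finite_subset)
        then show "B \<in> Zn p X (p - 1) T" using A zs_diff[OF fT A(1) T(3) A(3)] by (auto simp: Zn_def)
      qed
    qed
    then show ?thesis by (rule bij_betw_same_card)
  qed
  have k2: "card {T\<in>ZT. A \<subseteq> T} = card (Zn p X (2*p) (I - A))" if "A \<in> ZA" for A
  proof -
    have A: "A \<subseteq> I" "card A = p-1" "zs p X A" using that by (auto simp: ZA_def Zn_def)
    have fA: "finite A" using A assms(3) finite_subset by blast
    have "bij_betw (\<lambda>T. T - A) {T\<in>ZT. A \<subseteq> T} (Zn p X (2*p) (I - A))"
    proof (rule bij_betw_byWitness[where f' = "\<lambda>B. B \<union> A"])
      show "\<forall>a\<in>{T\<in>ZT. A \<subseteq> T}. a - A \<union> A = a" by auto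
      show "\<forall>a\<in>Zn p X (2*p) (I - A). a \<union> A - A = a" by (auto simp: Zn_def)
      show "(\<lambda>T. T - A) ` {T\<in>ZT. A \<subseteq> T} \<subseteq> Zn p X (2*p) (I - A)"
      proof
        fix B assume "B \<in> (\<lambda>T. T - A) ` {T\<in>ZT. A \<subseteq> T}"
        then obtain T where T: "T \<subseteq> I" "card T = 3*p-1" "zs p X T" "A \<subseteq> T" "B = T - A"
          by (auto simp: ZT_def Zn_def)
        have fT: "finite T" using T assms(3) finite_subset by blast
        have "card B = 2*p" using A T fT p3 by (simp add: card_Diff_subset finite_subset)
        then show "B \<in> Zn p X (2*p) (I - A)" using T zs_diff[OF fT T(4) T(3) A(3)] by (auto simp: Zn_def)
      qed
      show "(\<lambda>B. B \<union> A) ` Zn p X (2*p) (I - A) \<subseteq> {T\<in>ZT. A \<subseteq> T}"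
      proof
        fix T assume "T \<in> (\<lambda>B. B \<union> A) ` Zn p X (2*p) (I - A)"
        then obtain B where B: "B \<subseteq> I - A" "card B = 2*p" "zs p X B" "T = B \<union> A" by (auto simp: Zn_def)
        have fB: "finite B" using B assms(3) finite_subset by blast
        have dj: "B \<inter> A = {}" using B by auto
        have "card T = 3*p-1" using B fA fB dj p3 by (simp add: card_Un_disjoint A(2))
        moreover have "zs p X T" using zs_union[OF fB fA dj B(3) A(3)] B by simp
        ultimately show "T \<in> {T\<in>ZT. A \<subseteq> T}" using A B by (auto simp: ZT_def Zn_def)
      qed
    qed
    then show ?thesis by (rule bij_betw_same_card)
  qed
  have sub: "Zn p X (p-1) T = {A\<in>ZA. A \<subseteq> T}" if "T \<in> ZT" for T
    using that by (auto simp: ZT_def ZA_def Zn_def)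
  have "(\<Sum>T\<in>ZT. card {A\<in>ZA. A \<subseteq> T}) = (\<Sum>T\<in>ZT. \<Sum>A\<in>ZA. if A \<subseteq> T then 1 else (0::nat))"
    by (rule sum.cong) (simp_all add: sum.inter_filter[symmetric] finT)
  also have "\<dots> = (\<Sum>A\<in>ZA. \<Sum>T\<in>ZT. if A \<subseteq> T then 1 else (0::nat))" by (rule sum.swap)
  also have "\<dots> = (\<Sum>A\<in>ZA. card {T\<in>ZT. A \<subseteq> T})"
    by (rule sum.cong) (simp_all add: sum.inter_filter[symmetric] finT)
  finally have ex: "(\<Sum>T\<in>ZT. card (Zn p X (2*p) T)) = (\<Sum>A\<in>ZA. card (Zn p X (2*p) (I - A)))"
    using k1 k2 sub by simp
  have c1: "[int (\<Sum>T\<in>ZT. card (Zn p X (2*p) T)) = (\<Sum>T\<in>ZT. -1)] (mod int p)"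
    unfolding of_nat_sum
  proof (rule cong_sum)
    fix T assume "T \<in> ZT"
    then show "[int (card (Zn p X (2*p) T)) = -1] (mod int p)"
      by (intro cw) (auto simp: ZT_def Zn_def)
  qed
  have c2: "[int (\<Sum>A\<in>ZA. card (Zn p X (2*p) (I - A))) = (\<Sum>A\<in>ZA. -1)] (mod int p)"
    unfolding of_nat_sum
  proof (rule cong_sum)
    fix A assume A: "A \<in> ZA"
    then have "A \<subseteq> I" "card A = p - 1" by (auto simp: ZA_def Zn_def)
    then have "card (I - A) = 3*p-2" using assms(3,4) p3 by (simp add: card_Diff_subset finite_subset)
    then show "[int (card (Zn p X (2*p) (I - A))) = -1] (mod int p)"
      by (intro cw) auto
  qed
  have "[(\<Sum>T\<in>ZT. -1::int) = (\<Sum>A\<in>ZA. -1)] (mod int p)"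
    using c1 c2 ex by (metis cong_sym cong_trans)
  then have "[- int (card ZT) = - int (card ZA)] (mod int p)" by simp
  then have "[int (card ZA) = int (card ZT)] (mod int p)"
    by (metis cong_minus_minus_iff cong_sym)
  then show ?thesis unfolding zsc_Zn ZA_def[symmetric] ZT_def[symmetric] by (simp add: cong_int_iff)
qed
end
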